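(* Fix $n$ and $p\in[0,1]$. For $N_l\in\{1,\dots,n\}$ with $N_l\equiv n\pmod 2$, let $N_h=(n+N_l)/2$ and $N_b=(n-N_l)/2$ (so $N_b+N_h=n$, $N_h-N_b=N_l$), and let $M^{(n,N_l)}=\max_i\Delta_iH^1$ under $\mathbb{P}^{n,N_b,N_h,p}$. Then $N_l\mapsto M^{(n,N_l)}$ is non-increasing for the stochastic order.
   Context: Golf process on $\mathbb{Z}/n\mathbb{Z}$ under $\mathbb{P}^{n,N_b,N_h,p}$: initial configuration uniform among assignments with exactly $N_b$ balls and $N_h$ holes, the rest neutral; clocks i.i.d. uniform on $[0,1]$; at its clock time each ball performs an independent random walk (step $+1$ w.p. $p$, $-1$ w.p. $1-p$) stopped at the first not-yet-filled hole, which it fills. $H^1$ is the set of holes never filled; $\Delta_iH^1$ are the numbers of vertices strictly between cyclically consecutive elements of $H^1$. *)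

theory Defs
  imports Complex_Main
begin

text \<open>Vertices of Z/nZ are represented by 0..<n.
  walk_hit n p k U x h: probability that the random walk on Z/nZ started at x
  (step +1 w.p. p, -1 w.p. 1-p) hits the set U within k steps and that the
  first vertex of U it visits is h.\<close>

fun walk_hit :: "nat \<Rightarrow> real \<Rightarrow> nat \<Rightarrow> nat set \<Rightarrow> nat \<Rightarrow> nat \<Rightarrow> real" where
  "walk_hit n p 0 U x h = (if x \<in> U then (if x = h then 1 else 0) else 0)"
| "walk_hit n p (Suc k) U x h =
     (if x \<in> U then (if x = h then 1 else 0)
      else p * walk_hit n p k U ((x + 1) mod n) h
         + (1 - p) * walk_hit n p k U ((x + n - 1) mod n) h)"

definition hit_prob :: "nat \<Rightarrow> real \<Rightarrow> nat set \<Rightarrow> nat \<Rightarrow> nat \<Rightarrow> real" where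
  "hit_prob n p U x h = (SUP k. walk_hit n p k U x h)"

text \<open>Given the current set U of not-yet-filled holes and the list of balls in the
  order of their clocks, final_dist gives the probability that the final set of
  unfilled holes is S.\<close>
fun final_dist :: "nat \<Rightarrow> real \<Rightarrow> nat set \<Rightarrow> nat list \<Rightarrow> nat set \<Rightarrow> real" where
  "final_dist n p U [] S = (if S = U then 1 else 0)"
| "final_dist n p U (x # xs) S = (\<Sum>h\<in>U. hit_prob n p U x h * final_dist n p (U - {h}) xs S)"

definition configs :: "nat \<Rightarrow> nat \<Rightarrow> nat \<Rightarrow> (nat set \<times> nat set) set" where
  "configs n Nb Nh = {(B, H). B \<subseteq> {0..<n} \<and> H \<subseteq> {0..<n} \<and> B \<inter> H = {}
                        \<and> card B = Nb \<and> card H = Nh}"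

text \<open>Orderings of the balls (induced by i.i.d. continuous clocks: uniform).\<close>
definition orderings :: "nat set \<Rightarrow> nat list set" where
  "orderings B = {xs. distinct xs \<and> set xs = B}"

definition golf_H1_prob :: "nat \<Rightarrow> nat \<Rightarrow> nat \<Rightarrow> real \<Rightarrow> nat set \<Rightarrow> real" where
  "golf_H1_prob n Nb Nh p S =
     (\<Sum>(B, H)\<in>configs n Nb Nh.
        (\<Sum>xs\<in>orderings B. final_dist n p H xs S) / real (card (orderings B)))
     / real (card (configs n Nb Nh))"

definition gap :: "nat \<Rightarrow> nat set \<Rightarrow> nat \<Rightarrow> nat" where
  "gap n S a = (LEAST d. 0 < d \<and> (a + d) mod n \<in> S) - 1"

definition max_gap :: "nat \<Rightarrow> nat set \<Rightarrow> nat" where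
  "max_gap n S = Max (gap n S ` S)"

definition M_tail :: "nat \<Rightarrow> real \<Rightarrow> nat \<Rightarrow> nat \<Rightarrow> real" where
  "M_tail n p Nl t =
     (\<Sum>S\<in>{S. S \<subseteq> {0..<n} \<and> S \<noteq> {} \<and> t \<le> max_gap n S}.
        golf_H1_prob n ((n - Nl) div 2) ((n + Nl) div 2) p S)"

end

theory Submission
  imports Defs "HOL-Combinatorics.Multiset_Permutations"
begin


lemma wh_nonneg:
  assumes "0 \<le> p" "p \<le> 1"
  shows "0 \<le> walk_hit n p k U x h"
  using assms by (induction k arbitrary: x) auto

lemma wh_le1:
  assumes "0 \<le> p" "p \<le> 1"
  shows "walk_hit n p k U x h \<le> 1"
proof (induction k arbitrary: x)
  case 0 then show ?case by auto
next
  case (Suc k)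
  have "p * walk_hit n p k U ((x + 1) mod n) h \<le> p * 1"
    using Suc assms by (intro mult_left_mono) auto
  moreover have "(1 - p) * walk_hit n p k U ((x + n - 1) mod n) h \<le> (1 - p) * 1"
    using Suc assms by (intro mult_left_mono) auto
  ultimately show ?case by auto
qed

lemma wh_mono:
  assumes "0 \<le> p" "p \<le> 1"
  shows "walk_hit n p k U x h \<le> walk_hit n p (Suc k) U x h"
proof (induction k arbitrary: x)
  case 0 then show ?case using assms wh_nonneg[OF assms] by (auto simp del: walk_hit.simps(2)) (auto intro!: add_nonneg_nonneg mult_nonneg_nonneg wh_nonneg)
next
  case (Suc k)
  have "p * walk_hit n p k U ((x + 1) mod n) h \<le> p * walk_hit n p (Suc k) U ((x + 1) mod n) h"
    using Suc assms by (intro mult_left_mono) auto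
  moreover have "(1 - p) * walk_hit n p k U ((x + n - 1) mod n) h \<le> (1 - p) * walk_hit n p (Suc k) U ((x + n - 1) mod n) h"
    using Suc assms by (intro mult_left_mono) auto
  ultimately show ?case by (simp del: walk_hit.simps) (simp only: walk_hit.simps; auto)
qed

lemma wh_lim:
  assumes "0 \<le> p" "p \<le> 1"
  shows "(\<lambda>k. walk_hit n p k U x h) \<longlonglongrightarrow> hit_prob n p U x h"
  unfolding hit_prob_def
  apply (rule LIMSEQ_incseq_SUP)
   apply (unfold bdd_above_def, rule exI[of _ 1], use wh_le1[OF assms] in blast)
  using wh_mono[OF assms] by (auto intro!: incseq_SucI simp del: walk_hit.simps)

lemma hit_nonneg:
  assumes "0 \<le> p" "p \<le> 1"
  shows "0 \<le> hit_prob n p U x h"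
  by (rule LIMSEQ_le_const[OF wh_lim[OF assms]]) (use wh_nonneg[OF assms] in auto)

lemma hit_in:
  assumes "0 \<le> p" "p \<le> 1" "x \<in> U"
  shows "hit_prob n p U x h = (if x = h then 1 else 0)"
proof -
  have "\<And>k. walk_hit n p k U x h = (if x = h then 1 else 0)"
    using assms(3) by (case_tac k) auto
  then have "(\<lambda>k. walk_hit n p k U x h) \<longlonglongrightarrow> (if x = h then 1 else 0)" by simp
  from LIMSEQ_unique[OF wh_lim[OF assms(1,2)] this] show ?thesis .
qed

lemma hit_harm:
  assumes "0 \<le> p" "p \<le> 1" "x \<notin> U"
  shows "hit_prob n p U x h = p * hit_prob n p U ((x + 1) mod n) h
           + (1 - p) * hit_prob n p U ((x + n - 1) mod n) h"
proof -
  have "(\<lambda>k. walk_hit n p (Suc k) U x h) \<longlonglongrightarrow> hit_prob n p U x h"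
    using wh_lim[OF assms(1,2)] by (rule LIMSEQ_Suc)
  moreover have "(\<lambda>k. walk_hit n p (Suc k) U x h) \<longlonglongrightarrow> p * hit_prob n p U ((x + 1) mod n) h
           + (1 - p) * hit_prob n p U ((x + n - 1) mod n) h"
    using assms(3)
    by (simp, intro tendsto_intros wh_lim[OF assms(1,2)])
  ultimately show ?thesis by (rule LIMSEQ_unique)
qed



definition harm :: "nat \<Rightarrow> real \<Rightarrow> nat set \<Rightarrow> (nat \<Rightarrow> real) \<Rightarrow> bool" where
  "harm n p A f \<longleftrightarrow> (\<forall>x<n. x \<notin> A \<longrightarrow> f x = p * f ((x + 1) mod n) + (1 - p) * f ((x + n - 1) mod n))"

lemma step_mod_right: "0 < n \<Longrightarrow> ((x0 + j) mod n + 1) mod n = (x0 + Suc j) mod n"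
  by (simp add: mod_Suc_eq)

lemma step_mod_left:
  assumes "0 < n"
  shows "((x0 + (n - 1) * j) mod n + n - 1) mod n = (x0 + (n - 1) * Suc j) mod n"
proof -
  have ee: "x0 + (n - 1) * j + (n - 1) = x0 + (n - 1) * Suc j" by (simp add: mult_Suc_right)
  have "((x0 + (n - 1) * j) mod n + n - 1) mod n = ((x0 + (n - 1) * j) mod n + (n - 1)) mod n"
    using assms by simp
  also have "\<dots> = (x0 + (n - 1) * j + (n - 1)) mod n" by (simp add: mod_add_left_eq)
  also have "\<dots> = (x0 + (n - 1) * Suc j) mod n" by (simp only: ee)
  finally show ?thesis .
qed

lemma reach_left:
  fixes a x0 n :: nat
  assumes "a < n" "x0 < n"
  shows "(x0 + (n - 1) * (x0 + n - a)) mod n = a"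
proof -
  have "x0 + (n - 1) * (x0 + n - a) = n * (x0 + n - a - 1) + a"
  proof -
    have "int (x0 + (n - 1) * (x0 + n - a)) = int x0 + (int n - 1) * (int x0 + int n - int a)"
      using assms by (simp add: of_nat_diff)
    also have "\<dots> = int n * (int x0 + int n - int a - 1) + int a" by (simp add: algebra_simps)
    also have "\<dots> = int (n * (x0 + n - a - 1) + a)" using assms by (simp add: of_nat_diff)
    finally show ?thesis by linarith
  qed
  then show ?thesis using assms by simp
qed

lemma harm_le0:
  assumes p: "0 \<le> p" "p \<le> 1" and A: "A \<subseteq> {0..<n}" "A \<noteq> {}"
    and z: "\<forall>x\<in>A. f x = 0" and h: "harm n p A f"
  shows "\<forall>x<n. f x \<le> 0"
proof (rule ccontr)
  assume "\<not> (\<forall>x<n. f x \<le> 0)"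
  then obtain y where y: "y < n" "f y > 0" by force
  have n0: "0 < n" using y by simp
  define M where "M = Max (f ` {0..<n})"
  have Mge: "\<And>x. x < n \<Longrightarrow> f x \<le> M" unfolding M_def by (intro Max_ge) auto
  obtain x0 where x0: "x0 < n" "f x0 = M"
    using Max_in[of "f ` {0..<n}"] n0 unfolding M_def by fastforce
  have Mpos: "M > 0" using Mge[OF y(1)] y by simp
  obtain a where a: "a \<in> A" using A by blast
  have an: "a < n" using a A by auto
  show False
  proof (cases "p > 0")
    case True
    have "\<forall>j. f ((x0 + j) mod n) = M"
    proof
      fix j show "f ((x0 + j) mod n) = M"
      proof (induction j)
        case 0 then show ?case using x0 by simp
      next
        case (Suc j)
        define u where "u = (x0 + j) mod n"
        have un: "u < n" using n0 unfolding u_def by simp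
        have uA: "u \<notin> A" using Suc z Mpos unfolding u_def by auto
        have eq: "f u = p * f ((u + 1) mod n) + (1 - p) * f ((u + n - 1) mod n)"
          using h un uA unfolding harm_def by blast
        have b1: "f ((u + 1) mod n) \<le> M" using Mge n0 by simp
        have b2: "f ((u + n - 1) mod n) \<le> M" using Mge n0 by simp
        have "(1 - p) * f ((u + n - 1) mod n) \<le> (1 - p) * M" using b2 p by (intro mult_left_mono) auto
        moreover have "f u = M" using Suc unfolding u_def .
        ultimately have "M \<le> p * f ((u + 1) mod n) + (1 - p) * M" using eq by linarith
        then have "p * M \<le> p * f ((u + 1) mod n)" by (simp add: algebra_simps)
        then have "M \<le> f ((u + 1) mod n)" using True by simp
        then have "f ((u + 1) mod n) = M" using b1 by simp
        then show ?case using step_mod_right[OF n0] unfolding u_def by simp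
      qed
    qed
    then have "f ((x0 + (a + n - x0)) mod n) = M" by blast
    moreover have "(x0 + (a + n - x0)) mod n = a" using x0 an by simp
    ultimately show False using z a Mpos by simp
  next
    case False
    then have p0: "p = 0" using p by simp
    have "\<forall>j. f ((x0 + (n - 1) * j) mod n) = M"
    proof
      fix j show "f ((x0 + (n - 1) * j) mod n) = M"
      proof (induction j)
        case 0 then show ?case using x0 by simp
      next
        case (Suc j)
        define u where "u = (x0 + (n - 1) * j) mod n"
        have un: "u < n" using n0 unfolding u_def by simp
        have uA: "u \<notin> A" using Suc z Mpos unfolding u_def by auto
        have eq: "f u = p * f ((u + 1) mod n) + (1 - p) * f ((u + n - 1) mod n)"
          using h un uA unfolding harm_def by blast
        then have "f ((u + n - 1) mod n) = M" using Suc p0 unfolding u_def by simp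
        then show ?case using step_mod_left[OF n0] unfolding u_def by simp
      qed
    qed
    then have "f ((x0 + (n - 1) * (x0 + n - a)) mod n) = M" by blast
    then show False using reach_left[OF an x0(1)] z a Mpos by simp
  qed
qed

lemma harm_unique:
  assumes p: "0 \<le> p" "p \<le> 1" and A: "A \<subseteq> {0..<n}" "A \<noteq> {}"
    and e: "\<forall>x\<in>A. f x = g x" and hf: "harm n p A f" and hg: "harm n p A g"
    and x: "x < n"
  shows "f x = g x"
proof -
  have h1: "harm n p A (\<lambda>x. f x - g x)" unfolding harm_def
  proof (intro allI impI)
    fix y assume "y < n" "y \<notin> A"
    then have "f y = p * f ((y + 1) mod n) + (1 - p) * f ((y + n - 1) mod n)"
       "g y = p * g ((y + 1) mod n) + (1 - p) * g ((y + n - 1) mod n)"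
      using hf hg unfolding harm_def by blast+
    then show "f y - g y = p * (f ((y + 1) mod n) - g ((y + 1) mod n)) + (1 - p) * (f ((y + n - 1) mod n) - g ((y + n - 1) mod n))"
      by (simp add: algebra_simps)
  qed
  have h2: "harm n p A (\<lambda>x. g x - f x)" unfolding harm_def
  proof (intro allI impI)
    fix y assume "y < n" "y \<notin> A"
    then have "f y = p * f ((y + 1) mod n) + (1 - p) * f ((y + n - 1) mod n)"
       "g y = p * g ((y + 1) mod n) + (1 - p) * g ((y + n - 1) mod n)"
      using hf hg unfolding harm_def by blast+
    then show "g y - f y = p * (g ((y + 1) mod n) - f ((y + 1) mod n)) + (1 - p) * (g ((y + n - 1) mod n) - f ((y + n - 1) mod n))"
      by (simp add: algebra_simps)
  qed
  have "f x - g x \<le> 0" using harm_le0[OF p A _ h1] e x by auto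
  moreover have "g x - f x \<le> 0" using harm_le0[OF p A _ h2] e x by auto
  ultimately show ?thesis by simp
qed

lemma harm_hit: "0 \<le> p \<Longrightarrow> p \<le> 1 \<Longrightarrow> U \<subseteq> A \<Longrightarrow> harm n p A (\<lambda>x. hit_prob n p U x h)"
  unfolding harm_def using hit_harm by blast

lemma hit_sum1:
  assumes p: "0 \<le> p" "p \<le> 1" and U: "U \<subseteq> {0..<n}" "U \<noteq> {}" and x: "x < n"
  shows "(\<Sum>k\<in>U. hit_prob n p U x k) = 1"
proof -
  have fin: "finite U" using U finite_subset by blast
  have "harm n p U (\<lambda>x. \<Sum>k\<in>U. hit_prob n p U x k)"
    unfolding harm_def using hit_harm[OF p]
    by (auto simp: sum.distrib sum_distrib_left)
  moreover have "harm n p U (\<lambda>x. 1)" unfolding harm_def by simp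
  moreover have "\<forall>y\<in>U. (\<Sum>k\<in>U. hit_prob n p U y k) = 1"
  proof
    fix y assume y: "y \<in> U"
    have "(\<Sum>k\<in>U. hit_prob n p U y k) = (\<Sum>k\<in>U. if y = k then 1 else 0)"
      using hit_in[OF p y] by simp
    also have "\<dots> = 1" using fin y by simp
    finally show "(\<Sum>k\<in>U. hit_prob n p U y k) = 1" .
  qed
  ultimately show ?thesis using harm_unique[OF p U, of "\<lambda>x. \<Sum>k\<in>U. hit_prob n p U x k" "\<lambda>x. 1"] x by auto
qed

lemma hit_markov:
  assumes p: "0 \<le> p" "p \<le> 1" and U: "U \<subseteq> {0..<n}" and c: "c < n" "c \<notin> U"
    and k: "k \<in> U" and x: "x < n"
  shows "hit_prob n p U x k = hit_prob n p (insert c U) x k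
           + hit_prob n p (insert c U) x c * hit_prob n p U c k"
proof -
  let ?A = "insert c U"
  have A: "?A \<subseteq> {0..<n}" "?A \<noteq> {}" using U c by auto
  have h1: "harm n p ?A (\<lambda>x. hit_prob n p U x k)" unfolding harm_def using hit_harm[OF p] by auto
  have h2: "harm n p ?A (\<lambda>x. hit_prob n p ?A x k + hit_prob n p ?A x c * hit_prob n p U c k)"
    unfolding harm_def
  proof (intro allI impI)
    fix y assume "y < n" "y \<notin> ?A"
    then have "hit_prob n p ?A y k = p * hit_prob n p ?A ((y + 1) mod n) k + (1 - p) * hit_prob n p ?A ((y + n - 1) mod n) k"
       "hit_prob n p ?A y c = p * hit_prob n p ?A ((y + 1) mod n) c + (1 - p) * hit_prob n p ?A ((y + n - 1) mod n) c"
      using hit_harm[OF p] by blast+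
    note e = this
    show "hit_prob n p ?A y k + hit_prob n p ?A y c * hit_prob n p U c k =
      p * (hit_prob n p ?A ((y + 1) mod n) k + hit_prob n p ?A ((y + 1) mod n) c * hit_prob n p U c k) +
      (1 - p) * (hit_prob n p ?A ((y + n - 1) mod n) k + hit_prob n p ?A ((y + n - 1) mod n) c * hit_prob n p U c k)"
      apply (subst e(1), subst e(2)) by (simp add: algebra_simps)
  qed
  have e: "\<forall>y\<in>?A. hit_prob n p U y k = hit_prob n p ?A y k + hit_prob n p ?A y c * hit_prob n p U c k"
  proof
    fix y assume y: "y \<in> ?A"
    show "hit_prob n p U y k = hit_prob n p ?A y k + hit_prob n p ?A y c * hit_prob n p U c k"
    proof (cases "y = c")
      case True then show ?thesis using hit_in[OF p, of c ?A] c k by auto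
    next
      case False then have "y \<in> U" using y by simp
      then show ?thesis using hit_in[OF p, of y U] hit_in[OF p, of y ?A] False by auto
    qed
  qed
  show ?thesis using harm_unique[OF p A e h1 h2 x] .
qed



fun EE :: "nat \<Rightarrow> real \<Rightarrow> nat set \<Rightarrow> nat list \<Rightarrow> (nat set \<Rightarrow> real) \<Rightarrow> real" where
  "EE n p U [] g = g U"
| "EE n p U (x # xs) g = (\<Sum>k\<in>U. hit_prob n p U x k * EE n p (U - {k}) xs g)"

lemma fd_EE: "finite T \<Longrightarrow> (\<Sum>S\<in>T. final_dist n p U xs S) = EE n p U xs (\<lambda>S. if S \<in> T then 1 else 0)"
proof (induction xs arbitrary: U)
  case Nil
  then show ?case by (auto simp: sum.delta)
next
  case (Cons x xs)
  have "(\<Sum>S\<in>T. final_dist n p U (x # xs) S)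
      = (\<Sum>S\<in>T. \<Sum>h\<in>U. hit_prob n p U x h * final_dist n p (U - {h}) xs S)" by simp
  also have "\<dots> = (\<Sum>h\<in>U. \<Sum>S\<in>T. hit_prob n p U x h * final_dist n p (U - {h}) xs S)"
    by (rule sum.swap)
  also have "\<dots> = (\<Sum>h\<in>U. hit_prob n p U x h * (\<Sum>S\<in>T. final_dist n p (U - {h}) xs S))"
    by (simp add: sum_distrib_left)
  also have "\<dots> = EE n p U (x # xs) (\<lambda>S. if S \<in> T then 1 else 0)" using Cons by simp
  finally show ?case .
qed

lemma EE_snoc: "EE n p U (xs @ [b]) g = EE n p U xs (\<lambda>S. \<Sum>k\<in>S. hit_prob n p S b k * g (S - {k}))"
  by (induction xs arbitrary: U) auto

lemma coupling:
  assumes p: "0 \<le> p" "p \<le> 1"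
    and hg: "\<And>S e. S \<subseteq> {0..<n} \<Longrightarrow> e < n \<Longrightarrow> e \<notin> S \<Longrightarrow> card S = m \<Longrightarrow> g (insert e S) \<le> h S"
  shows "U \<subseteq> {0..<n} \<Longrightarrow> c < n \<Longrightarrow> c \<notin> U \<Longrightarrow> set ys \<subseteq> {0..<n} \<Longrightarrow> card U = length ys + m
    \<Longrightarrow> EE n p (insert c U) ys g \<le> EE n p U ys h"
proof (induction ys arbitrary: U c)
  case Nil
  then show ?case using hg by simp
next
  case (Cons x xs)
  have fin: "finite U" using Cons.prems(1) finite_subset by blast
  have Une: "U \<noteq> {}" using Cons.prems(5) by auto
  have xn: "x < n" using Cons.prems(4) by auto
  have cU: "insert c U - {c} = U" using Cons.prems(3) by auto
  have IH1: "EE n p (insert c (U - {k})) xs g \<le> EE n p (U - {k}) xs h" if k: "k \<in> U" for k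
    using Cons.IH[of "U - {k}" c] Cons.prems k fin by auto
  have IH2: "EE n p U xs g \<le> EE n p (U - {k}) xs h" if k: "k \<in> U" for k
  proof -
    have "insert k (U - {k}) = U" using k by auto
    moreover have "k < n" using k Cons.prems(1) by auto
    ultimately show ?thesis using Cons.IH[of "U - {k}" k] Cons.prems k fin by auto
  qed
  have hc: "0 \<le> hit_prob n p (insert c U) x c" using hit_nonneg[OF p] .
  have "EE n p (insert c U) (x # xs) g =
      hit_prob n p (insert c U) x c * EE n p U xs g
      + (\<Sum>k\<in>U. hit_prob n p (insert c U) x k * EE n p (insert c (U - {k})) xs g)"
  proof -
    have "EE n p (insert c U) (x # xs) g = (\<Sum>k\<in>insert c U. hit_prob n p (insert c U) x k * EE n p (insert c U - {k}) xs g)"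
      by simp
    also have "\<dots> = hit_prob n p (insert c U) x c * EE n p (insert c U - {c}) xs g
      + (\<Sum>k\<in>U. hit_prob n p (insert c U) x k * EE n p (insert c U - {k}) xs g)"
      using fin Cons.prems(3) by (simp add: sum.insert)
    also have "(\<Sum>k\<in>U. hit_prob n p (insert c U) x k * EE n p (insert c U - {k}) xs g)
       = (\<Sum>k\<in>U. hit_prob n p (insert c U) x k * EE n p (insert c (U - {k})) xs g)"
    proof (rule sum.cong)
      fix k assume "k \<in> U"
      then have "insert c U - {k} = insert c (U - {k})" using Cons.prems(3) by auto
      then show "hit_prob n p (insert c U) x k * EE n p (insert c U - {k}) xs g =
           hit_prob n p (insert c U) x k * EE n p (insert c (U - {k})) xs g" by simp
    qed simp
    finally show ?thesis using cU by simp
  qed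
  also have "\<dots> \<le> hit_prob n p (insert c U) x c * (\<Sum>k\<in>U. hit_prob n p U c k * EE n p (U - {k}) xs h)
      + (\<Sum>k\<in>U. hit_prob n p (insert c U) x k * EE n p (U - {k}) xs h)"
  proof (rule add_mono)
    have "EE n p U xs g = (\<Sum>k\<in>U. hit_prob n p U c k) * EE n p U xs g"
      using hit_sum1[OF p Cons.prems(1) Une Cons.prems(2)] by simp
    also have "\<dots> = (\<Sum>k\<in>U. hit_prob n p U c k * EE n p U xs g)" by (simp add: sum_distrib_right)
    also have "\<dots> \<le> (\<Sum>k\<in>U. hit_prob n p U c k * EE n p (U - {k}) xs h)"
      by (intro sum_mono mult_left_mono IH2 hit_nonneg[OF p])
    finally show "hit_prob n p (insert c U) x c * EE n p U xs g \<le> hit_prob n p (insert c U) x c * (\<Sum>k\<in>U. hit_prob n p U c k * EE n p (U - {k}) xs h)"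
      by (intro mult_left_mono hc)
  next
    show "(\<Sum>k\<in>U. hit_prob n p (insert c U) x k * EE n p (insert c (U - {k})) xs g) \<le> (\<Sum>k\<in>U. hit_prob n p (insert c U) x k * EE n p (U - {k}) xs h)"
      by (intro sum_mono mult_left_mono IH1 hit_nonneg[OF p])
  qed
  also have "\<dots> = (\<Sum>k\<in>U. (hit_prob n p (insert c U) x k + hit_prob n p (insert c U) x c * hit_prob n p U c k) * EE n p (U - {k}) xs h)"
    by (simp add: sum_distrib_left sum.distrib algebra_simps)
  also have "\<dots> = (\<Sum>k\<in>U. hit_prob n p U x k * EE n p (U - {k}) xs h)"
    using hit_markov[OF p Cons.prems(1,2,3) _ xn] by simp
  also have "\<dots> = EE n p U (x # xs) h" by simp
  finally show ?case .
qed



lemma dd_props: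
  fixes n a :: nat
  assumes "S \<subseteq> {0..<n}" "a \<in> S"
  shows "0 < (LEAST d. 0 < d \<and> (a + d) mod n \<in> S) \<and> (a + (LEAST d. 0 < d \<and> (a + d) mod n \<in> S)) mod n \<in> S"
proof -
  have an: "a < n" using assms by auto
  then have "(a + n) mod n = a" by simp
  then have "0 < n \<and> (a + n) mod n \<in> S" using assms(2) an by simp
  then show ?thesis by (rule LeastI)
qed

lemma gap_sub:
  assumes A: "A \<subseteq> A'" "A' \<subseteq> {0..<n}" "A \<noteq> {}" and a: "a \<in> A'"
  shows "\<exists>a0\<in>A. gap n A' a \<le> gap n A a0"
proof -
  have an: "a < n" using a A by auto
  define P where "P = {r. \<exists>a0\<in>A. (a0 + r) mod n = a}"
  obtain b where b: "b \<in> A" using A by blast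
  have bn: "b < n" using b A by auto
  have "(b + (a + n - b)) mod n = a" using an bn by simp
  then have "a + n - b \<in> P" unfolding P_def using b by blast
  then have rP: "(LEAST r. r \<in> P) \<in> P" by (rule LeastI)
  define r where "r = (LEAST r. r \<in> P)"
  obtain a0 where a0: "a0 \<in> A" "(a0 + r) mod n = a" using rP unfolding r_def P_def by blast
  have a0n: "a0 < n" using a0 A by auto
  define D where "D = (LEAST d. 0 < d \<and> (a0 + d) mod n \<in> A)"
  have D: "0 < D" "(a0 + D) mod n \<in> A" using dd_props[of A n a0] a0 A unfolding D_def by auto
  have rD: "r < D"
  proof (rule ccontr)
    assume "\<not> r < D"
    then have "D \<le> r" by simp
    have "((a0 + D) mod n + (r - D)) mod n = (a0 + D + (r - D)) mod n" by (simp add: mod_add_left_eq)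
    also have "a0 + D + (r - D) = a0 + r" using \<open>D \<le> r\<close> by simp
    finally have "r - D \<in> P" unfolding P_def using D(2) a0(2) by auto
    then have "r \<le> r - D" unfolding r_def by (rule Least_le)
    then show False using D(1) \<open>D \<le> r\<close> by simp
  qed
  have "(a + (D - r)) mod n = ((a0 + r) mod n + (D - r)) mod n" using a0 by simp
  also have "\<dots> = (a0 + r + (D - r)) mod n" by (simp add: mod_add_left_eq)
  also have "a0 + r + (D - r) = a0 + D" using rD by simp
  finally have "(a + (D - r)) mod n \<in> A'" using D(2) A by auto
  then have "(LEAST d. 0 < d \<and> (a + d) mod n \<in> A') \<le> D - r"
    using rD by (intro Least_le) simp
  then have "gap n A' a \<le> gap n A a0" unfolding gap_def D_def[symmetric] by simp
  then show ?thesis using a0 by blast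
qed

lemma max_gap_mono:
  assumes A: "A \<subseteq> A'" "A' \<subseteq> {0..<n}" "A \<noteq> {}"
  shows "max_gap n A' \<le> max_gap n A"
proof -
  have fA: "finite A" "finite A'" using A finite_subset by (blast intro: finite_subset)+
  show ?thesis unfolding max_gap_def
  proof (subst Max_le_iff)
    show "finite (gap n A' ` A')" using fA by simp
    show "gap n A' ` A' \<noteq> {}" using A by auto
    show "\<forall>y\<in>gap n A' ` A'. y \<le> Max (gap n A ` A)"
    proof
      fix y assume "y \<in> gap n A' ` A'"
      then obtain a where a: "a \<in> A'" "y = gap n A' a" by blast
      obtain a0 where "a0 \<in> A" "gap n A' a \<le> gap n A a0" using gap_sub[OF A a(1)] by blast
      moreover have "gap n A a0 \<le> Max (gap n A ` A)" using fA \<open>a0 \<in> A\<close> by (intro Max_ge) auto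
      ultimately show "y \<le> Max (gap n A ` A)" using a by simp
    qed
  qed
qed



definition Tset :: "nat \<Rightarrow> nat \<Rightarrow> nat set set" where
  "Tset n t = {S. S \<subseteq> {0..<n} \<and> S \<noteq> {} \<and> t \<le> max_gap n S}"

definition gT :: "nat \<Rightarrow> nat \<Rightarrow> nat set \<Rightarrow> real" where
  "gT n t S = (if S \<in> Tset n t then 1 else 0)"

lemma gT_anti:
  assumes "A \<subseteq> A'" "A' \<subseteq> {0..<n}" "A \<noteq> {}"
  shows "gT n t A' \<le> gT n t A"
  using max_gap_mono[OF assms] assms unfolding gT_def Tset_def by auto

lemma key:
  assumes p: "0 \<le> p" "p \<le> 1" and H: "H \<subseteq> {0..<n}" and b: "b < n" "b \<notin> H"
    and ys: "set ys \<subseteq> {0..<n}" and c: "card H = length ys + m" and m: "2 \<le> m"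
  shows "EE n p (insert b H) ys (gT n t) \<le> EE n p H (ys @ [b]) (gT n t)"
proof -
  have "EE n p (insert b H) ys (gT n t) \<le> EE n p H ys (\<lambda>S. \<Sum>k\<in>S. hit_prob n p S b k * gT n t (S - {k}))"
  proof (rule coupling[OF p _ H b ys c])
    fix S e assume S: "S \<subseteq> {0..<n}" "e < n" "e \<notin> S" "card S = m"
    have fS: "finite S" using S finite_subset by blast
    have Sne: "S \<noteq> {}" using S m by auto
    have "gT n t (insert e S) = (\<Sum>k\<in>S. hit_prob n p S b k) * gT n t (insert e S)"
      using hit_sum1[OF p S(1) Sne b(1)] by simp
    also have "\<dots> = (\<Sum>k\<in>S. hit_prob n p S b k * gT n t (insert e S))" by (simp add: sum_distrib_right)
    also have "\<dots> \<le> (\<Sum>k\<in>S. hit_prob n p S b k * gT n t (S - {k}))"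
    proof (intro sum_mono mult_left_mono hit_nonneg[OF p])
      fix k assume k: "k \<in> S"
      have "card (S - {k}) = m - 1" using k fS S by simp
      then have "S - {k} \<noteq> {}" using m by (intro notI) simp
      then show "gT n t (insert e S) \<le> gT n t (S - {k})"
        using S by (intro gT_anti) auto
    qed
    finally show "gT n t (insert e S) \<le> (\<Sum>k\<in>S. hit_prob n p S b k * gT n t (S - {k}))" .
  qed
  then show ?thesis by (simp add: EE_snoc)
qed

lemma orderings_eq: "orderings B = permutations_of_set B"
  unfolding orderings_def permutations_of_set_def by auto

lemma mem_orderings: "xs \<in> orderings B \<longleftrightarrow> distinct xs \<and> set xs = B"
  unfolding orderings_def by simp

lemma ord_sum:
  assumes "finite B" "B \<noteq> {}"
  shows "(\<Sum>xs\<in>orderings B. f xs) = (\<Sum>b\<in>B. \<Sum>ys\<in>orderings (B - {b}). f (ys @ [b]))"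
proof -
  have fo: "finite (orderings A)" for A by (simp add: orderings_eq)
  have "(\<Sum>b\<in>B. \<Sum>ys\<in>orderings (B - {b}). f (ys @ [b])) = (\<Sum>x\<in>Sigma B (\<lambda>b. orderings (B - {b})). f (snd x @ [fst x]))"
    using assms fo by (subst sum.Sigma) (auto simp: split_beta)
  also have "\<dots> = (\<Sum>xs\<in>orderings B. f xs)"
  proof (rule sum.reindex_bij_witness[where i = "\<lambda>xs. (last xs, butlast xs)" and j = "\<lambda>x. snd x @ [fst x]"])
    fix a assume "a \<in> Sigma B (\<lambda>b. orderings (B - {b}))"
    show "(last (snd a @ [fst a]), butlast (snd a @ [fst a])) = a" by simp
  next
    fix a assume a: "a \<in> Sigma B (\<lambda>b. orderings (B - {b}))"
    then obtain b ys where ab: "a = (b, ys)" "b \<in> B" "ys \<in> orderings (B - {b})" by blast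
    then have "distinct ys" "set ys = B - {b}" by (simp_all add: mem_orderings)
    then show "snd a @ [fst a] \<in> orderings B"
      using ab(1,2) by (simp add: mem_orderings insert_absorb)
  next
    fix xs assume xs: "xs \<in> orderings B"
    then have "set xs = B" by (simp add: mem_orderings)
    then have "xs \<noteq> []" using assms(2) by (intro notI) simp
    then show "snd (last xs, butlast xs) @ [fst (last xs, butlast xs)] = xs" by simp
  next
    fix xs assume xs: "xs \<in> orderings B"
    have d: "distinct xs" "set xs = B" using xs by (simp_all add: mem_orderings)
    then have ne: "xs \<noteq> []" using assms(2) by (intro notI) simp
    then have e: "butlast xs @ [last xs] = xs" by simp
    have "distinct (butlast xs @ [last xs])" using d(1) by (simp only: e)
    then have d2: "distinct (butlast xs)" "last xs \<notin> set (butlast xs)" by simp_all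
    have "set (butlast xs @ [last xs]) = B" using d(2) by (simp only: e)
    then have "insert (last xs) (set (butlast xs)) = B" by simp
    then have "set (butlast xs) = B - {last xs}" "last xs \<in> B" using d2(2) by blast+
    then show "(last xs, butlast xs) \<in> Sigma B (\<lambda>b. orderings (B - {b}))"
      using d2(1) by (simp add: mem_orderings)
  next
    fix a assume "a \<in> Sigma B (\<lambda>b. orderings (B - {b}))"
    show "f (snd a @ [fst a]) = f (snd a @ [fst a])" by simp
  qed
  finally show ?thesis by simp
qed



definition avg :: "nat \<Rightarrow> real \<Rightarrow> (nat set \<Rightarrow> real) \<Rightarrow> nat set \<Rightarrow> nat set \<Rightarrow> real" where
  "avg n p g B H = (\<Sum>xs\<in>orderings B. EE n p H xs g) / real (card (orderings B))"

lemma finite_configs: "finite (configs n Nb Nh)"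
proof -
  have "configs n Nb Nh \<subseteq> Pow {0..<n} \<times> Pow {0..<n}" unfolding configs_def by auto
  then show ?thesis by (rule finite_subset) simp
qed

lemma finite_Tset: "finite (Tset n t)"
proof -
  have "Tset n t \<subseteq> Pow {0..<n}" unfolding Tset_def by auto
  then show ?thesis by (rule finite_subset) simp
qed

lemma golf_sum:
  "(\<Sum>S\<in>Tset n t. golf_H1_prob n Nb Nh p S)
   = (\<Sum>c\<in>configs n Nb Nh. avg n p (gT n t) (fst c) (snd c)) / real (card (configs n Nb Nh))"
proof -
  let ?C = "configs n Nb Nh"
  have g: "golf_H1_prob n Nb Nh p S = (\<Sum>c\<in>?C. (\<Sum>xs\<in>orderings (fst c). final_dist n p (snd c) xs S) / real (card (orderings (fst c)))) / real (card ?C)" for S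
    unfolding golf_H1_prob_def by (simp add: split_beta)
  have "(\<Sum>S\<in>Tset n t. golf_H1_prob n Nb Nh p S)
     = (\<Sum>S\<in>Tset n t. \<Sum>c\<in>?C. (\<Sum>xs\<in>orderings (fst c). final_dist n p (snd c) xs S) / real (card (orderings (fst c)))) / real (card ?C)"
    unfolding g by (simp add: sum_divide_distrib)
  also have "(\<Sum>S\<in>Tset n t. \<Sum>c\<in>?C. (\<Sum>xs\<in>orderings (fst c). final_dist n p (snd c) xs S) / real (card (orderings (fst c))))
     = (\<Sum>c\<in>?C. \<Sum>S\<in>Tset n t. (\<Sum>xs\<in>orderings (fst c). final_dist n p (snd c) xs S) / real (card (orderings (fst c))))"
    by (rule sum.swap)
  also have "\<dots> = (\<Sum>c\<in>?C. avg n p (gT n t) (fst c) (snd c))"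
  proof (rule sum.cong)
    fix c assume "c \<in> ?C"
    have "(\<Sum>S\<in>Tset n t. (\<Sum>xs\<in>orderings (fst c). final_dist n p (snd c) xs S) / real (card (orderings (fst c))))
       = (\<Sum>S\<in>Tset n t. \<Sum>xs\<in>orderings (fst c). final_dist n p (snd c) xs S) / real (card (orderings (fst c)))"
      by (simp add: sum_divide_distrib)
    also have "(\<Sum>S\<in>Tset n t. \<Sum>xs\<in>orderings (fst c). final_dist n p (snd c) xs S)
       = (\<Sum>xs\<in>orderings (fst c). \<Sum>S\<in>Tset n t. final_dist n p (snd c) xs S)" by (rule sum.swap)
    also have "\<dots> = (\<Sum>xs\<in>orderings (fst c). EE n p (snd c) xs (gT n t))"
      using fd_EE[OF finite_Tset] unfolding gT_def by simp
    finally show "(\<Sum>S\<in>Tset n t. (\<Sum>xs\<in>orderings (fst c). final_dist n p (snd c) xs S) / real (card (orderings (fst c))))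
        = avg n p (gT n t) (fst c) (snd c)" unfolding avg_def .
  qed simp
  finally show ?thesis .
qed

lemma dc:
  assumes "1 \<le> Nb"
  shows "(\<Sum>c\<in>configs n Nb Nh. \<Sum>b\<in>fst c. F (fst c - {b}) (insert b (snd c)))
       = (\<Sum>c\<in>configs n (Nb - 1) (Nh + 1). \<Sum>h\<in>snd c. F (fst c) (snd c))"
proof -
  let ?C = "configs n Nb Nh" and ?C' = "configs n (Nb - 1) (Nh + 1)"
  have fib: "finite (fst c)" "finite (snd c)" if "c \<in> configs n a b'" for c a b'
    using that unfolding configs_def by (auto intro: finite_subset[of _ "{0..<n}"])
  have "(\<Sum>c\<in>?C. \<Sum>b\<in>fst c. F (fst c - {b}) (insert b (snd c)))
     = (\<Sum>x\<in>Sigma ?C fst. F (fst (fst x) - {snd x}) (insert (snd x) (snd (fst x))))"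
    using finite_configs fib by (subst sum.Sigma) (auto simp: split_beta)
  also have "\<dots> = (\<Sum>x\<in>Sigma ?C' snd. F (fst (fst x)) (snd (fst x)))"
  proof (rule sum.reindex_bij_witness[where j = "\<lambda>x. ((fst (fst x) - {snd x}, insert (snd x) (snd (fst x))), snd x)"
        and i = "\<lambda>x. ((insert (snd x) (fst (fst x)), snd (fst x) - {snd x}), snd x)"])
    fix a assume a: "a \<in> Sigma ?C fst"
    then obtain B H b where ab: "a = ((B, H), b)" "(B, H) \<in> ?C" "b \<in> B" by auto
    then have "b \<notin> H" unfolding configs_def by auto
    then show "((insert (snd ((fst (fst a) - {snd a}, insert (snd a) (snd (fst a))), snd a))
            (fst (fst ((fst (fst a) - {snd a}, insert (snd a) (snd (fst a))), snd a))),
           snd (fst ((fst (fst a) - {snd a}, insert (snd a) (snd (fst a))), snd a)) -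
           {snd ((fst (fst a) - {snd a}, insert (snd a) (snd (fst a))), snd a)}),
          snd ((fst (fst a) - {snd a}, insert (snd a) (snd (fst a))), snd a)) = a"
      using ab by (auto simp: insert_absorb)
  next
    fix a assume a: "a \<in> Sigma ?C fst"
    then obtain B H b where ab: "a = ((B, H), b)" "(B, H) \<in> ?C" "b \<in> B" by auto
    have BH: "B \<subseteq> {0..<n}" "H \<subseteq> {0..<n}" "B \<inter> H = {}" "card B = Nb" "card H = Nh"
      using ab(2) unfolding configs_def by auto
    have fH: "finite H" using BH(2) by (rule finite_subset) simp
    have bH: "b \<notin> H" using BH(3) ab(3) by auto
    have "card (B - {b}) = Nb - 1" using ab(3) BH(4) by simp
    moreover have "card (insert b H) = Nh + 1" using fH bH BH(5) by simp
    ultimately have "(B - {b}, insert b H) \<in> ?C'" using BH ab(3) unfolding configs_def by auto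
    then show "((fst (fst a) - {snd a}, insert (snd a) (snd (fst a))), snd a) \<in> Sigma ?C' snd"
      using ab by auto
  next
    fix a assume a: "a \<in> Sigma ?C' snd"
    then obtain B H h where ab: "a = ((B, H), h)" "(B, H) \<in> ?C'" "h \<in> H" by auto
    then have "h \<notin> B" unfolding configs_def by auto
    then show "((fst (fst ((insert (snd a) (fst (fst a)), snd (fst a) - {snd a}), snd a)) -
            {snd ((insert (snd a) (fst (fst a)), snd (fst a) - {snd a}), snd a)},
            insert (snd ((insert (snd a) (fst (fst a)), snd (fst a) - {snd a}), snd a))
             (snd (fst ((insert (snd a) (fst (fst a)), snd (fst a) - {snd a}), snd a)))),
           snd ((insert (snd a) (fst (fst a)), snd (fst a) - {snd a}), snd a)) = a"
      using ab by (auto simp: insert_absorb)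
  next
    fix a assume a: "a \<in> Sigma ?C' snd"
    then obtain B H h where ab: "a = ((B, H), h)" "(B, H) \<in> ?C'" "h \<in> H" by auto
    have BH: "B \<subseteq> {0..<n}" "H \<subseteq> {0..<n}" "B \<inter> H = {}" "card B = Nb - 1" "card H = Nh + 1"
      using ab(2) unfolding configs_def by auto
    have fB: "finite B" using BH(1) by (rule finite_subset) simp
    have hB: "h \<notin> B" using BH(3) ab(3) by auto
    have "card (insert h B) = Nb" using fB hB BH(4) assms by simp
    moreover have "card (H - {h}) = Nh" using ab(3) BH(5) by simp
    ultimately have "(insert h B, H - {h}) \<in> ?C" using BH ab(3) unfolding configs_def by auto
    then show "((insert (snd a) (fst (fst a)), snd (fst a) - {snd a}), snd a) \<in> Sigma ?C fst"
      using ab by auto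
  next
    fix a assume a: "a \<in> Sigma ?C fst"
    show "F (fst (fst ((fst (fst a) - {snd a}, insert (snd a) (snd (fst a))), snd a)))
           (snd (fst ((fst (fst a) - {snd a}, insert (snd a) (snd (fst a))), snd a))) =
          F (fst (fst a) - {snd a}) (insert (snd a) (snd (fst a)))" by simp
  qed
  also have "\<dots> = (\<Sum>c\<in>?C'. \<Sum>h\<in>snd c. F (fst c) (snd c))"
    using finite_configs fib by (subst sum.Sigma) (auto simp: split_beta)
  finally show ?thesis .
qed



lemma card_orderings: "finite B \<Longrightarrow> card (orderings B) = fact (card B)"
  by (simp add: orderings_eq)

lemma avg_ineq:
  assumes p: "0 \<le> p" "p \<le> 1" and c: "(B, H) \<in> configs n Nb Nh" and Nb: "1 \<le> Nb" "Nb + 1 \<le> Nh"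
  shows "(\<Sum>b\<in>B. avg n p (gT n t) (B - {b}) (insert b H)) \<le> real Nb * avg n p (gT n t) B H"
proof -
  have BH: "B \<subseteq> {0..<n}" "H \<subseteq> {0..<n}" "B \<inter> H = {}" "card B = Nb" "card H = Nh"
    using c unfolding configs_def by auto
  have fB: "finite B" using BH(1) by (rule finite_subset) simp
  have Bne: "B \<noteq> {}" using BH(4) Nb(1) by auto
  let ?f = "fact (Nb - 1) :: real"
  have fpos: "?f > 0" by simp
  have cardo: "card (orderings (B - {b})) = fact (Nb - 1)" if "b \<in> B" for b
    using that fB BH(4) by (simp add: card_orderings)
  have "(\<Sum>b\<in>B. ?f * avg n p (gT n t) (B - {b}) (insert b H))
      = (\<Sum>b\<in>B. \<Sum>ys\<in>orderings (B - {b}). EE n p (insert b H) ys (gT n t))"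
  proof (rule sum.cong)
    fix b assume b: "b \<in> B"
    show "?f * avg n p (gT n t) (B - {b}) (insert b H) = (\<Sum>ys\<in>orderings (B - {b}). EE n p (insert b H) ys (gT n t))"
      unfolding avg_def using cardo[OF b] fpos by (simp add: of_nat_fact)
  qed simp
  also have "\<dots> \<le> (\<Sum>b\<in>B. \<Sum>ys\<in>orderings (B - {b}). EE n p H (ys @ [b]) (gT n t))"
  proof (intro sum_mono)
    fix b ys assume b: "b \<in> B" and ys: "ys \<in> orderings (B - {b})"
    have ysd: "distinct ys" "set ys = B - {b}" using ys by (simp_all add: mem_orderings)
    have len: "length ys = Nb - 1" using ysd BH(4) fB b by (simp add: distinct_card[symmetric])
    show "EE n p (insert b H) ys (gT n t) \<le> EE n p H (ys @ [b]) (gT n t)"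
    proof (rule key[OF p BH(2)])
      show "b < n" using b BH(1) by auto
      show "b \<notin> H" using b BH(3) by auto
      show "set ys \<subseteq> {0..<n}" using ysd BH(1) by auto
      show "card H = length ys + (Nh - Nb + 1)" using len BH(5) Nb by simp
      show "2 \<le> Nh - Nb + 1" using Nb by simp
    qed
  qed
  also have "\<dots> = (\<Sum>xs\<in>orderings B. EE n p H xs (gT n t))"
    by (rule ord_sum[OF fB Bne, where f = "\<lambda>xs. EE n p H xs (gT n t)", symmetric])
  also have "\<dots> = fact Nb * avg n p (gT n t) B H"
    unfolding avg_def using fB BH(4) by (simp add: card_orderings)
  finally have *: "?f * (\<Sum>b\<in>B. avg n p (gT n t) (B - {b}) (insert b H)) \<le> fact Nb * avg n p (gT n t) B H"
    by (simp add: sum_distrib_left)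
  have NbS: "Nb = Suc (Nb - 1)" using Nb(1) by simp
  have "(fact Nb :: real) = fact (Suc (Nb - 1))" using NbS by simp
  also have "\<dots> = real (Suc (Nb - 1)) * ?f" by (rule fact_Suc)
  finally have "(fact Nb :: real) = real Nb * ?f" using NbS by simp
  with * have "?f * (\<Sum>b\<in>B. avg n p (gT n t) (B - {b}) (insert b H)) \<le> ?f * (real Nb * avg n p (gT n t) B H)"
    by (simp add: algebra_simps)
  then show ?thesis using fpos by simp
qed

lemma configs_ne:
  assumes "Nb + Nh = n"
  shows "card (configs n Nb Nh) > 0"
proof -
  have "({0..<Nb}, {Nb..<n}) \<in> configs n Nb Nh" unfolding configs_def using assms by auto
  then show ?thesis using finite_configs by (auto simp: card_gt_0_iff)
qed

lemma main_avg:
  assumes p: "0 \<le> p" "p \<le> 1" and Nb: "1 \<le> Nb" "Nb + 1 \<le> Nh" "Nb + Nh = n"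
  shows "(\<Sum>c\<in>configs n (Nb - 1) (Nh + 1). avg n p (gT n t) (fst c) (snd c)) / real (card (configs n (Nb - 1) (Nh + 1)))
      \<le> (\<Sum>c\<in>configs n Nb Nh. avg n p (gT n t) (fst c) (snd c)) / real (card (configs n Nb Nh))"
proof -
  let ?C = "configs n Nb Nh" and ?C' = "configs n (Nb - 1) (Nh + 1)"
  define X where "X = (\<Sum>c\<in>?C. avg n p (gT n t) (fst c) (snd c))"
  define Y where "Y = (\<Sum>c\<in>?C'. avg n p (gT n t) (fst c) (snd c))"
  have c'pos: "real (card ?C') > 0" using configs_ne[of "Nb - 1" "Nh + 1" n] Nb by simp
  have cardC': "card (snd c) = Nh + 1" if "c \<in> ?C'" for c using that unfolding configs_def by auto
  have cardC: "card (fst c) = Nb" if "c \<in> ?C" for c using that unfolding configs_def by auto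
  have "(\<Sum>c\<in>?C. \<Sum>b\<in>fst c. (1::real)) = (\<Sum>c\<in>?C'. \<Sum>h\<in>snd c. (1::real))"
    by (rule dc[OF Nb(1), where F = "\<lambda>_ _. (1::real)" and n = n and Nh = Nh])
  moreover have "(\<Sum>c\<in>?C. \<Sum>b\<in>fst c. (1::real)) = (\<Sum>c\<in>?C. real Nb)"
    by (rule sum.cong) (simp_all add: cardC)
  moreover have "(\<Sum>c\<in>?C'. \<Sum>h\<in>snd c. (1::real)) = (\<Sum>c\<in>?C'. real (Nh + 1))"
    by (rule sum.cong) (simp_all add: cardC')
  ultimately have cc: "real (card ?C) * real Nb = real (card ?C') * real (Nh + 1)"
    by simp
  have "(Nh + 1) * Y = (\<Sum>c\<in>?C'. \<Sum>h\<in>snd c. avg n p (gT n t) (fst c) (snd c))"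
    unfolding Y_def using cardC' by (simp add: sum_distrib_left)
  also have "\<dots> = (\<Sum>c\<in>?C. \<Sum>b\<in>fst c. avg n p (gT n t) (fst c - {b}) (insert b (snd c)))"
    using dc[OF Nb(1), where F = "avg n p (gT n t)" and n = n and Nh = Nh] by simp
  also have "\<dots> \<le> (\<Sum>c\<in>?C. real Nb * avg n p (gT n t) (fst c) (snd c))"
  proof (rule sum_mono)
    fix c assume "c \<in> ?C"
    then show "(\<Sum>b\<in>fst c. avg n p (gT n t) (fst c - {b}) (insert b (snd c))) \<le> real Nb * avg n p (gT n t) (fst c) (snd c)"
      using avg_ineq[OF p _ Nb(1,2), of "fst c" "snd c" n t] by simp
  qed
  also have "\<dots> = real Nb * X" unfolding X_def by (simp add: sum_distrib_left)
  finally have YX: "real (Nh + 1) * Y \<le> real Nb * X" by simp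
  have cpos: "real (card ?C) > 0" using cc c'pos Nb by (metis configs_ne of_nat_0_less_iff)
  have "Y * real (card ?C) * real Nb = Y * real (card ?C') * real (Nh + 1)" using cc by (simp add: algebra_simps)
  also have "\<dots> \<le> X * real (card ?C') * real Nb"
    using mult_left_mono[OF YX, of "real (card ?C')"] c'pos by (simp add: algebra_simps)
  finally have "(Y * real (card ?C)) * real Nb \<le> (X * real (card ?C')) * real Nb" by (simp add: algebra_simps)
  then have "Y * real (card ?C) \<le> X * real (card ?C')" using Nb(1) by simp
  then show ?thesis unfolding X_def[symmetric] Y_def[symmetric] using cpos c'pos
    by (simp add: divide_simps)
qed

lemma M_tail_eq:
  "M_tail n p Nl t = (\<Sum>c\<in>configs n ((n - Nl) div 2) ((n + Nl) div 2). avg n p (gT n t) (fst c) (snd c))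
      / real (card (configs n ((n - Nl) div 2) ((n + Nl) div 2)))"
  unfolding M_tail_def golf_sum[symmetric] Tset_def by simp

lemma step2:
  assumes p: "0 \<le> p" "p \<le> 1" and a: "1 \<le> Nl" "Nl + 2 \<le> n" "Nl mod 2 = n mod 2"
  shows "M_tail n p (Nl + 2) t \<le> M_tail n p Nl t"
proof -
  have le: "Nl \<le> n" using a(2) by linarith
  have "n mod 2 = Nl mod 2" using a(3) by (rule sym)
  then have "2 dvd (n - Nl)" using mod_eq_dvd_iff_nat[OF le] by blast
  then obtain q where q0: "n - Nl = 2 * q" by (elim dvdE)
  have nq: "n = Nl + 2 * q" using q0 le by linarith
  have q1: "1 \<le> q" using a(2) nq by linarith
  have e0: "(n - Nl) div 2 = q" using q0 by simp
  have e0': "(n + Nl) div 2 = Nl + q"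
  proof -
    have "n + Nl = 2 * (Nl + q)" using nq by (simp add: distrib_left)
    then show ?thesis by simp
  qed
  have e1: "(n - (Nl + 2)) div 2 = q - 1"
  proof -
    have "n - (Nl + 2) = 2 * (q - 1)" using nq q1 by (simp add: diff_mult_distrib2)
    then show ?thesis by simp
  qed
  have e2: "(n + (Nl + 2)) div 2 = Nl + q + 1"
  proof -
    have "n + (Nl + 2) = 2 * (Nl + q + 1)" using nq by (simp add: distrib_left)
    then show ?thesis by (simp only: nonzero_mult_div_cancel_left[of 2] zero_neq_numeral[symmetric]) simp
  qed
  have N: "1 \<le> q" "q + 1 \<le> Nl + q" "q + (Nl + q) = n" using q1 a(1) nq by linarith+
  show ?thesis unfolding M_tail_eq e0 e0' e1 e2
    by (rule main_avg[OF p N])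
qed

theorem mainTheorem14:
  fixes n :: nat and p :: real and Nl Nl' t :: nat
  assumes "0 \<le> p" and "p \<le> 1"
    and "1 \<le> Nl" and "Nl \<le> Nl'" and "Nl' \<le> n"
    and "Nl mod 2 = n mod 2" and "Nl' mod 2 = n mod 2"
  shows "M_tail n p Nl' t \<le> M_tail n p Nl t"
proof -
  have "Nl' mod 2 = Nl mod 2" using assms(6,7) by simp
  then have "2 dvd (Nl' - Nl)" using mod_eq_dvd_iff_nat[OF assms(4)] by blast
  then obtain k where k0: "Nl' - Nl = 2 * k" by (elim dvdE)
  have k: "Nl' = Nl + 2 * k" using k0 assms(4) by linarith
  have "\<forall>k. Nl + 2 * k \<le> n \<longrightarrow> M_tail n p (Nl + 2 * k) t \<le> M_tail n p Nl t"
  proof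
    fix k show "Nl + 2 * k \<le> n \<longrightarrow> M_tail n p (Nl + 2 * k) t \<le> M_tail n p Nl t"
    proof (induction k)
      case 0 then show ?case by simp
    next
      case (Suc k)
      show ?case
      proof
        assume le: "Nl + 2 * Suc k \<le> n"
        have a1: "1 \<le> Nl + 2 * k" using assms(3) by linarith
        have a2: "Nl + 2 * k + 2 \<le> n" using le by simp
        have a30: "(Nl + 2 * k) mod 2 = Nl mod 2" by simp
        have a3: "(Nl + 2 * k) mod 2 = n mod 2" using a30 assms(6) by (rule trans)
        have A: "M_tail n p (Nl + 2 * k + 2) t \<le> M_tail n p (Nl + 2 * k) t"
          by (rule step2[OF assms(1,2) a1 a2 a3])
        have B: "Nl + 2 * Suc k = Nl + 2 * k + 2" by simp
        have C: "M_tail n p (Nl + 2 * k) t \<le> M_tail n p Nl t" using Suc.IH a2 by simp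
        show "M_tail n p (Nl + 2 * Suc k) t \<le> M_tail n p Nl t" unfolding B by (rule order_trans[OF A C])
      qed
    qed
  qed
  then show ?thesis using k assms(5) by blast
qed

end
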